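(* Let $\psi,\varphi$ be CNF formulas that contain no tautological clauses, and let $X\subseteq\mathrm{Vars}(\psi)\cup\mathrm{Vars}(\varphi)$. If $\psi\models\varphi$, then $\psi[Y]\models\varphi[Y]$ for every $Y\in\mathcal{A}_3(X)$.
   Context: A clause is tautological if it contains both $x$ and $\neg x$. An extended literal is a literal or a fresh symbol $x_\varepsilon$ for a variable $x$. For a CNF formula $\phi$: if $\ell$ is a literal, $\phi[\ell]$ deletes all clauses containing $\ell$ and deletes the complementary literal $\sim\!\ell$ from the remaining clauses; $\phi[x_\varepsilon]$ deletes all occurrences of $x$ and $\neg x$ from all clauses. $\mathcal{A}_3(X)$ is the set of all sets $\{a_x : x\in X\}$ with $a_x\in\{x,\neg x,x_\varepsilon\}$; for $Y\in\mathcal{A}_3(X)$, $\phi[Y]$ is the successive application of the reducts by all elements of $Y$ (order irrelevant). *)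

theory Defs
  imports Main
begin

datatype 'v lit = Pos 'v | Neg 'v

datatype 'v elit = Lit "'v lit" | Eps 'v

type_synonym 'v clause = "'v lit set"
type_synonym 'v cnf = "'v clause set"

fun lit_var :: "'v lit \<Rightarrow> 'v" where
  "lit_var (Pos x) = x" | "lit_var (Neg x) = x"

fun compl :: "'v lit \<Rightarrow> 'v lit" where
  "compl (Pos x) = Neg x" | "compl (Neg x) = Pos x"

definition cnf_formula :: "'v cnf \<Rightarrow> bool" where
  "cnf_formula \<phi> \<longleftrightarrow> finite \<phi> \<and> (\<forall>C\<in>\<phi>. finite C)"

definition tautological :: "'v clause \<Rightarrow> bool" where
  "tautological C \<longleftrightarrow> (\<exists>x. Pos x \<in> C \<and> Neg x \<in> C)"

definition vars :: "'v cnf \<Rightarrow> 'v set" where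
  "vars \<phi> = (\<Union>C\<in>\<phi>. lit_var ` C)"

fun lit_sat :: "('v \<Rightarrow> bool) \<Rightarrow> 'v lit \<Rightarrow> bool" where
  "lit_sat \<alpha> (Pos x) = \<alpha> x" | "lit_sat \<alpha> (Neg x) = (\<not> \<alpha> x)"

definition cnf_sat :: "('v \<Rightarrow> bool) \<Rightarrow> 'v cnf \<Rightarrow> bool" where
  "cnf_sat \<alpha> \<phi> \<longleftrightarrow> (\<forall>C\<in>\<phi>. \<exists>l\<in>C. lit_sat \<alpha> l)"

definition entails :: "'v cnf \<Rightarrow> 'v cnf \<Rightarrow> bool" (infix "\<Turnstile>" 50) where
  "\<psi> \<Turnstile> \<phi> \<longleftrightarrow> (\<forall>\<alpha>. cnf_sat \<alpha> \<psi> \<longrightarrow> cnf_sat \<alpha> \<phi>)"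

fun reduct :: "'v cnf \<Rightarrow> 'v elit \<Rightarrow> 'v cnf" where
  "reduct \<phi> (Lit l) = (\<lambda>C. C - {compl l}) ` {C\<in>\<phi>. l \<notin> C}"
| "reduct \<phi> (Eps x) = (\<lambda>C. C - {Pos x, Neg x}) ` \<phi>"

definition reduct_list :: "'v cnf \<Rightarrow> 'v elit list \<Rightarrow> 'v cnf" where
  "reduct_list \<phi> ys = foldl reduct \<phi> ys"

definition A3 :: "'v set \<Rightarrow> 'v elit set set" where
  "A3 X = {Y. \<exists>a. (\<forall>x\<in>X. a x \<in> {Lit (Pos x), Lit (Neg x), Eps x}) \<and> Y = a ` X}"

end

theory Submission
  imports Defs
begin

lemma ls_upd: "lit_var m \<noteq> x \<Longrightarrow> lit_sat (\<alpha>(x:=b)) m = lit_sat \<alpha> m"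
  by (cases m) auto

lemma lv_eq: "lit_var m = lit_var l \<Longrightarrow> m = l \<or> m = compl l"
  by (cases m; cases l) auto

lemma sat_l: "lit_sat (\<alpha>(lit_var l := (case l of Pos _ \<Rightarrow> True | Neg _ \<Rightarrow> False))) l"
  by (cases l) auto

lemma nsat_cl: "\<not> lit_sat (\<alpha>(lit_var l := (case l of Pos _ \<Rightarrow> True | Neg _ \<Rightarrow> False))) (compl l)"
  by (cases l) auto

lemma step_lit:
  assumes "\<psi> \<Turnstile> \<phi>" shows "reduct \<psi> (Lit l) \<Turnstile> reduct \<phi> (Lit l)"
  unfolding entails_def
proof (intro allI impI)
  fix \<alpha> assume a: "cnf_sat \<alpha> (reduct \<psi> (Lit l))"
  define \<beta> where "\<beta> = \<alpha>(lit_var l := (case l of Pos _ \<Rightarrow> True | Neg _ \<Rightarrow> False))"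
  have eq: "lit_sat \<beta> m = lit_sat \<alpha> m" if "m \<noteq> l" "m \<noteq> compl l" for m
    unfolding \<beta>_def using that lv_eq ls_upd by metis
  have "cnf_sat \<beta> \<psi>"
    unfolding cnf_sat_def
  proof
    fix C assume C: "C \<in> \<psi>"
    show "\<exists>m\<in>C. lit_sat \<beta> m"
    proof (cases "l \<in> C")
      case True thus ?thesis using sat_l \<beta>_def by metis
    next
      case False
      then obtain m where "m \<in> C - {compl l}" "lit_sat \<alpha> m"
        using a C unfolding cnf_sat_def by auto
      thus ?thesis using eq False by (metis DiffD1 DiffD2 singletonI)
    qed
  qed
  hence b: "cnf_sat \<beta> \<phi>" using assms unfolding entails_def by blast
  show "cnf_sat \<alpha> (reduct \<phi> (Lit l))"
    unfolding cnf_sat_def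
  proof
    fix D assume "D \<in> reduct \<phi> (Lit l)"
    then obtain C where C: "C \<in> \<phi>" "l \<notin> C" "D = C - {compl l}" by auto
    then obtain m where "m \<in> C" "lit_sat \<beta> m" using b unfolding cnf_sat_def by auto
    moreover have "m \<noteq> compl l" using \<open>lit_sat \<beta> m\<close> nsat_cl \<beta>_def by metis
    moreover have "m \<noteq> l" using \<open>m \<in> C\<close> C(2) by auto
    ultimately show "\<exists>m\<in>D. lit_sat \<alpha> m" using C eq by auto
  qed
qed

lemma step_eps:
  assumes "\<psi> \<Turnstile> \<phi>" and nt: "\<forall>C\<in>\<phi>. \<not> tautological C"
  shows "reduct \<psi> (Eps x) \<Turnstile> reduct \<phi> (Eps x)"
  unfolding entails_def
proof (intro allI impI)
  fix \<alpha> assume a: "cnf_sat \<alpha> (reduct \<psi> (Eps x))"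
  have eq: "lit_sat (\<alpha>(x:=b)) m = lit_sat \<alpha> m" if "m \<noteq> Pos x" "m \<noteq> Neg x" for m b
    using that by (cases m) auto
  have s: "cnf_sat (\<alpha>(x:=b)) \<phi>" for b
  proof -
    have "cnf_sat (\<alpha>(x:=b)) \<psi>"
      unfolding cnf_sat_def
    proof
      fix C assume C: "C \<in> \<psi>"
      then obtain m where "m \<in> C - {Pos x, Neg x}" "lit_sat \<alpha> m"
        using a unfolding cnf_sat_def by auto
      thus "\<exists>m\<in>C. lit_sat (\<alpha>(x:=b)) m" using eq by auto
    qed
    thus ?thesis using assms unfolding entails_def by blast
  qed
  show "cnf_sat \<alpha> (reduct \<phi> (Eps x))"
    unfolding cnf_sat_def
  proof
    fix D assume "D \<in> reduct \<phi> (Eps x)"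
    then obtain C where C: "C \<in> \<phi>" "D = C - {Pos x, Neg x}" by auto
    show "\<exists>m\<in>D. lit_sat \<alpha> m"
    proof (rule ccontr)
      assume n: "\<not> ?thesis"
      obtain m1 where m1: "m1 \<in> C" "lit_sat (\<alpha>(x:=True)) m1" using s C unfolding cnf_sat_def by blast
      obtain m2 where m2: "m2 \<in> C" "lit_sat (\<alpha>(x:=False)) m2" using s C unfolding cnf_sat_def by blast
      have "m1 = Pos x \<or> m1 = Neg x" using m1 n C eq by auto
      hence "m1 = Pos x" using m1 by auto
      have "m2 = Pos x \<or> m2 = Neg x" using m2 n C eq by auto
      hence "m2 = Neg x" using m2 by auto
      thus False using nt C \<open>m1 = Pos x\<close> m1 m2 unfolding tautological_def by blast
    qed
  qed
qed

lemma nt_red: "\<forall>C\<in>\<phi>. \<not> tautological C \<Longrightarrow> \<forall>C\<in>reduct \<phi> y. \<not> tautological C"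
  by (cases y) (auto simp: tautological_def)

lemma gen: "\<forall>C\<in>\<phi>. \<not> tautological C \<Longrightarrow> \<psi> \<Turnstile> \<phi> \<Longrightarrow> foldl reduct \<psi> ys \<Turnstile> foldl reduct \<phi> ys"
proof (induction ys arbitrary: \<psi> \<phi>)
  case Nil thus ?case by simp
next
  case (Cons y ys)
  have "reduct \<psi> y \<Turnstile> reduct \<phi> y"
    using Cons.prems step_lit step_eps by (cases y) auto
  moreover have "\<forall>C\<in>reduct \<phi> y. \<not> tautological C" using Cons.prems(1) by (rule nt_red)
  ultimately show ?case using Cons.IH[of "reduct \<phi> y" "reduct \<psi> y"] by simp
qed

theorem mainTheorem6:
  fixes \<psi> \<phi> :: "'v cnf" and X :: "'v set"
  assumes "cnf_formula \<psi>" and "cnf_formula \<phi>"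
    and "\<forall>C\<in>\<psi>. \<not> tautological C" and "\<forall>C\<in>\<phi>. \<not> tautological C"
    and "X \<subseteq> vars \<psi> \<union> vars \<phi>"
    and "\<psi> \<Turnstile> \<phi>"
  shows "\<forall>Y\<in>A3 X. \<forall>ys. distinct ys \<and> set ys = Y \<longrightarrow>
           reduct_list \<psi> ys \<Turnstile> reduct_list \<phi> ys"
  using gen assms unfolding reduct_list_def by blast

end
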